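(* Let $K\in{\rm Alg}(V)$ be a unital commutative associative $F$-algebra and let $f,g\in{\rm Gl}(V)$. Write $L(x)$ for left multiplication by $x$ in $K$. The following are equivalent: (i) $K^{(f,g)}$ is a unital algebra; (ii) there exists $w\in K^\times$ with $K^{(f,g)}=K^{(w)}$; (iii) $K^{(f,g)}\cong K$. Moreover, in this case $w$ is uniquely determined, $w^{-1}$ is the unit element of $K^{(f,g)}$, and there exist $u,v\in K$ with $w=uv$, $f=L(u)$ and $g=L(v)$. Finally, an $F$-linear map $\varphi:K^{(f,g)}\to K$ is an algebra isomorphism if and only if $\varphi=\sigma\circ L(w)$ for some $\sigma\in{\rm Aut}_F(K)$.
   Context: $F$ is a field and $V$ is a finite-dimensional $F$-vector space. ${\rm Alg}(V)$ denotes the set of $F$-bilinear multiplications on $V$; $xAy$ denotes the product of $x,y$ in $A\in{\rm Alg}(V)$. For $f,g\in{\rm End}_F(V)$ the principal Albert homotope $A^{(f,g)}$ is $V$ with product $xA^{(f,g)}y=f(x)A\,g(y)$. For $w\in K^\times$ (the invertible elements of $K$), the Jordan isotope $K^{(w)}\in{\rm Alg}(V)$ is defined by $xK^{(w)}y=xwy$. *)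

theory Defs
  imports Complex_Main
begin

definition bilinear_mult :: "('f::field \<Rightarrow> 'v::ab_group_add \<Rightarrow> 'v) \<Rightarrow> ('v \<Rightarrow> 'v \<Rightarrow> 'v) \<Rightarrow> bool" where
  "bilinear_mult scale A \<longleftrightarrow>
     (\<forall>x. Vector_Spaces.linear scale scale (A x)) \<and>
     (\<forall>y. Vector_Spaces.linear scale scale (\<lambda>x. A x y))"

definition is_unit_elem :: "('v \<Rightarrow> 'v \<Rightarrow> 'v) \<Rightarrow> 'v \<Rightarrow> bool" where
  "is_unit_elem A e \<longleftrightarrow> (\<forall>x. A e x = x \<and> A x e = x)"

definition unital :: "('v \<Rightarrow> 'v \<Rightarrow> 'v) \<Rightarrow> bool" where
  "unital A \<longleftrightarrow> (\<exists>e. is_unit_elem A e)"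

definition commutative_alg :: "('v \<Rightarrow> 'v \<Rightarrow> 'v) \<Rightarrow> bool" where
  "commutative_alg A \<longleftrightarrow> (\<forall>x y. A x y = A y x)"

definition associative_alg :: "('v \<Rightarrow> 'v \<Rightarrow> 'v) \<Rightarrow> bool" where
  "associative_alg A \<longleftrightarrow> (\<forall>x y z. A (A x y) z = A x (A y z))"

definition is_inverse :: "('v \<Rightarrow> 'v \<Rightarrow> 'v) \<Rightarrow> 'v \<Rightarrow> 'v \<Rightarrow> bool" where
  "is_inverse A w z \<longleftrightarrow> (\<exists>e. is_unit_elem A e \<and> A w z = e \<and> A z w = e)"

definition invertible_elem :: "('v \<Rightarrow> 'v \<Rightarrow> 'v) \<Rightarrow> 'v \<Rightarrow> bool" where
  "invertible_elem A w \<longleftrightarrow> (\<exists>z. is_inverse A w z)"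

definition lmult :: "('v \<Rightarrow> 'v \<Rightarrow> 'v) \<Rightarrow> 'v \<Rightarrow> 'v \<Rightarrow> 'v" where
  "lmult A x = (\<lambda>y. A x y)"

definition homotope :: "('v \<Rightarrow> 'v \<Rightarrow> 'v) \<Rightarrow> ('v \<Rightarrow> 'v) \<Rightarrow> ('v \<Rightarrow> 'v) \<Rightarrow> 'v \<Rightarrow> 'v \<Rightarrow> 'v" where
  "homotope A f g = (\<lambda>x y. A (f x) (g y))"

text \<open>Jordan isotope K^(w): x K^(w) y = x w y (= (xw)y, K associative).\<close>
definition isotope :: "('v \<Rightarrow> 'v \<Rightarrow> 'v) \<Rightarrow> 'v \<Rightarrow> 'v \<Rightarrow> 'v \<Rightarrow> 'v" where
  "isotope A w = (\<lambda>x y. A (A x w) y)"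

definition alg_iso :: "('f::field \<Rightarrow> 'v::ab_group_add \<Rightarrow> 'v) \<Rightarrow> ('v \<Rightarrow> 'v \<Rightarrow> 'v) \<Rightarrow> ('v \<Rightarrow> 'v \<Rightarrow> 'v) \<Rightarrow> ('v \<Rightarrow> 'v) \<Rightarrow> bool" where
  "alg_iso scale A B \<phi> \<longleftrightarrow> Vector_Spaces.linear scale scale \<phi> \<and> bij \<phi> \<and>
     (\<forall>x y. \<phi> (A x y) = B (\<phi> x) (\<phi> y))"

definition alg_isomorphic :: "('f::field \<Rightarrow> 'v::ab_group_add \<Rightarrow> 'v) \<Rightarrow> ('v \<Rightarrow> 'v \<Rightarrow> 'v) \<Rightarrow> ('v \<Rightarrow> 'v \<Rightarrow> 'v) \<Rightarrow> bool" where
  "alg_isomorphic scale A B \<longleftrightarrow> (\<exists>\<phi>. alg_iso scale A B \<phi>)"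

definition GL :: "('f::field \<Rightarrow> 'v::ab_group_add \<Rightarrow> 'v) \<Rightarrow> ('v \<Rightarrow> 'v) set" where
  "GL scale = {f. Vector_Spaces.linear scale scale f \<and> bij f}"

end

theory Submission
  imports Defs
begin


locale cal =
  fixes K :: "'v \<Rightarrow> 'v \<Rightarrow> 'v" and e :: 'v
  assumes A: "K (K x y) z = K x (K y z)" and C: "K x y = K y x" and E: "K e x = x"
begin

lemma LC: "K x (K y z) = K y (K x z)"
  by (metis A C)

lemma E2: "K x e = x" using C E by metis

lemmas ac = A C LC E E2

lemma unit_iff: "is_unit_elem K c \<longleftrightarrow> c = e"
  unfolding is_unit_elem_def by (metis E E2)

lemma inv_iff: "is_inverse K w z \<longleftrightarrow> K w z = e"
  unfolding is_inverse_def unit_iff using C by metis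

lemma invertible_iff: "invertible_elem K w \<longleftrightarrow> (\<exists>z. K w z = e)"
  unfolding invertible_elem_def inv_iff by simp

lemma F1:
  assumes "is_unit_elem (homotope K f g) c"
  shows "\<exists>w. invertible_elem K w \<and> homotope K f g = isotope K w"
proof -
  have h1: "\<And>y. K (f c) (g y) = y" "\<And>x. K (f x) (g c) = x"
    using assms by (auto simp: is_unit_elem_def homotope_def)
  have a: "K (f c) (g e) = e" by (rule h1(1))
  have b: "K (f e) (g c) = e" by (rule h1(2))
  have gg: "g y = K (g e) y" for y
  proof -
    have "K (g e) y = K (g e) (K (f c) (g y))" using h1(1) by simp
    also have "\<dots> = K (K (f c) (g e)) (g y)" by (metis A C)
    also have "\<dots> = g y" using a E by simp
    finally show ?thesis by simp
  qed
  have ff: "f x = K (f e) x" for x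
  proof -
    have "K (f e) x = K (f e) (K (f x) (g c))" using h1(2) by simp
    also have "\<dots> = K (K (f e) (g c)) (f x)" by (metis A C)
    also have "\<dots> = f x" using b E by simp
    finally show ?thesis by simp
  qed
  define w where "w = K (f e) (g e)"
  have "K w (K (g c) (f c)) = K (K (f e) (g c)) (K (f c) (g e))"
    unfolding w_def by (metis A C)
  also have "\<dots> = e" using a b E by simp
  finally have inv: "invertible_elem K w" using invertible_iff by blast
  have "homotope K f g = isotope K w"
    unfolding homotope_def isotope_def w_def
    apply (intro ext)
    apply (subst ff, subst gg)
    by (metis A C)
  with inv show ?thesis by blast
qed

lemma iso_unit:
  assumes "invertible_elem K w" "is_inverse K w z"
  shows "is_unit_elem (isotope K w) z"
  using assms(2) unfolding inv_iff is_unit_elem_def isotope_def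
  by (metis A C E)

end

theorem lemma1p9:
  fixes scale :: "'f::field \<Rightarrow> 'v::ab_group_add \<Rightarrow> 'v"
    and K :: "'v \<Rightarrow> 'v \<Rightarrow> 'v"
    and f g :: "'v \<Rightarrow> 'v"
  assumes "vector_space scale"
    and "\<exists>B. finite_dimensional_vector_space scale B"
    and "bilinear_mult scale K"
    and "unital K" and "commutative_alg K" and "associative_alg K"
    and "f \<in> GL scale" and "g \<in> GL scale"
  shows "(unital (homotope K f g) \<longleftrightarrow>
            (\<exists>w. invertible_elem K w \<and> homotope K f g = isotope K w))
       \<and> ((\<exists>w. invertible_elem K w \<and> homotope K f g = isotope K w) \<longleftrightarrow>
            alg_isomorphic scale (homotope K f g) K)
       \<and> ((\<exists>w. invertible_elem K w \<and> homotope K f g = isotope K w) \<longrightarrow>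
           (\<exists>!w. invertible_elem K w \<and> homotope K f g = isotope K w)
         \<and> (\<forall>w. invertible_elem K w \<and> homotope K f g = isotope K w \<longrightarrow>
              (\<forall>z. is_inverse K w z \<longrightarrow> is_unit_elem (homotope K f g) z)
            \<and> (\<exists>u v. w = K u v \<and> f = lmult K u \<and> g = lmult K v)
            \<and> (\<forall>\<phi>. Vector_Spaces.linear scale scale \<phi> \<longrightarrow>
                 (alg_iso scale (homotope K f g) K \<phi> \<longleftrightarrow>
                  (\<exists>\<sigma>. alg_iso scale K K \<sigma> \<and> \<phi> = \<sigma> \<circ> lmult K w)))))"
proof -
  obtain e where ue: "is_unit_elem K e" using assms(4) unfolding unital_def by blast
  interpret cal K e
    apply unfold_locales
    using assms(5,6) ue unfolding commutative_alg_def associative_alg_def is_unit_elem_def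
    by auto
  have linK: "Vector_Spaces.linear scale scale (K x)" for x
    using assms(3) unfolding bilinear_mult_def by blast
  have bijK: "bij (K w)" if "K w z = e" for w z
  proof (rule o_bij[where g="K z"])
    have "K z (K w x) = K (K w z) x" "K w (K z x) = K (K w z) x" for x by (simp_all add: A C LC)
    then show "K z \<circ> K w = id" "K w \<circ> K z = id" using that E by (simp_all add: fun_eq_iff)
  qed
  define H where "H = homotope K f g"
  define P where "P = (\<exists>w. invertible_elem K w \<and> H = isotope K w)"
  have F2: "unital H" if P
  proof -
    from \<open>P\<close> obtain w where w: "invertible_elem K w" "H = isotope K w" unfolding P_def by blast
    then obtain z where "is_inverse K w z" unfolding invertible_elem_def by blast
    then have "is_unit_elem (isotope K w) z" by (rule iso_unit[OF w(1)])
    then show ?thesis unfolding unital_def w(2) by (rule exI)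
  qed
  have F1': "P" if uH: "unital H"
  proof -
    obtain c where "is_unit_elem H c" using uH unfolding unital_def by blast
    then show ?thesis unfolding P_def H_def by (rule F1)
  qed
  have isoLw: "alg_iso scale H K (lmult K w)" if inw: "invertible_elem K w" and Hw: "H = isotope K w" for w
  proof -
    obtain z where z: "K w z = e" using inw unfolding invertible_iff by blast
    have "K w (K (K x w) y) = K (K w x) (K w y)" for x y
      by (simp add: A C LC E)
    then show ?thesis unfolding alg_iso_def lmult_def Hw isotope_def
      using linK bijK[OF z] by blast
  qed
  have F3: "alg_isomorphic scale H K" if P
  proof -
    obtain w where "invertible_elem K w" "H = isotope K w" using \<open>P\<close> unfolding P_def by blast
    then show ?thesis unfolding alg_isomorphic_def using isoLw by blast
  qed
  have F4: "unital H" if ai: "alg_isomorphic scale H K"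
  proof -
    obtain \<phi> where p: "alg_iso scale H K \<phi>" using ai unfolding alg_isomorphic_def by blast
    have bij: "bij \<phi>" and hom: "\<And>x y. \<phi> (H x y) = K (\<phi> x) (\<phi> y)"
      using p unfolding alg_iso_def by auto
    define c where "c = inv \<phi> e"
    have pc: "\<phi> c = e" unfolding c_def using bij by (simp add: bij_is_surj surj_f_inv_f)
    have inj: "inj \<phi>" using bij bij_is_inj by blast
    have "H c x = x \<and> H x c = x" for x
      using hom[of c x] hom[of x c] pc E E2 inj by (auto dest: injD)
    then show ?thesis unfolding unital_def is_unit_elem_def by blast
  qed
  have F5: "(\<forall>z. is_inverse K w z \<longrightarrow> is_unit_elem H z)
            \<and> (\<exists>u v. w = K u v \<and> f = lmult K u \<and> g = lmult K v)
            \<and> (\<forall>\<phi>. Vector_Spaces.linear scale scale \<phi> \<longrightarrow>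
                 (alg_iso scale H K \<phi> \<longleftrightarrow>
                  (\<exists>\<sigma>. alg_iso scale K K \<sigma> \<and> \<phi> = \<sigma> \<circ> lmult K w)))"
    if w: "invertible_elem K w" "H = isotope K w" for w
  proof (intro conjI allI impI)
    obtain z where z: "K w z = e" using w(1) unfolding invertible_iff by blast
    show "is_unit_elem H z" if "is_inverse K w z" for z
      using iso_unit[OF w(1) that] w(2) by simp
    have hw: "K (f x) (g y) = K (K x w) y" for x y
      using fun_cong[OF fun_cong[OF w(2)[unfolded H_def homotope_def isotope_def], of x], of y]
      by simp
    have we: "w = K (f e) (g e)" using hw[of e e] by (simp add: E E2)
    have zw: "K z w = e" using z C by metis
    have i1: "K (g e) (K z (f e)) = e"
    proof -
      have "K (g e) (K z (f e)) = K z (K (f e) (g e))" by (simp add: A C LC E)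
      then show ?thesis using we zw by simp
    qed
    have i2: "K (f e) (K z (g e)) = e"
    proof -
      have "K (f e) (K z (g e)) = K z (K (f e) (g e))" by (simp add: A C LC E)
      then show ?thesis using we zw by simp
    qed
    have fx: "f x = K (f e) x" for x
    proof -
      have "f x = K (f x) (K (g e) (K z (f e)))"
        using i1 E2 by simp
      also have "\<dots> = K (K (f x) (g e)) (K z (f e))" by (simp add: A)
      also have "\<dots> = K (K (K x w) z) (f e)" using hw[of x e] by (simp add: A E E2)
      also have "\<dots> = K (K x (K w z)) (f e)" by (simp add: A)
      also have "\<dots> = K (f e) x" using z by (simp add: E E2 C)
      finally show ?thesis .
    qed
    have gy: "g y = K (g e) y" for y
    proof -
      have "g y = K (g y) (K (f e) (K z (g e)))"
        using i2 E2 by simp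
      also have "\<dots> = K (K (f e) (g y)) (K z (g e))" by (simp add: A C LC E)
      also have "\<dots> = K (K (K e w) y) (K z (g e))" using hw[of e y] by simp
      also have "\<dots> = K (K w z) (K y (g e))" by (simp add: A C LC E)
      also have "\<dots> = K (g e) y" using z by (simp add: E C)
      finally show ?thesis .
    qed
    show "\<exists>u v. w = K u v \<and> f = lmult K u \<and> g = lmult K v"
    proof (intro exI conjI)
      show "w = K (f e) (g e)" by (rule we)
      show "f = lmult K (f e)" unfolding lmult_def by (rule ext) (rule fx)
      show "g = lmult K (g e)" unfolding lmult_def by (rule ext) (rule gy)
    qed
    fix \<phi> assume lin: "Vector_Spaces.linear scale scale \<phi>"
    show "alg_iso scale H K \<phi> \<longleftrightarrow> (\<exists>\<sigma>. alg_iso scale K K \<sigma> \<and> \<phi> = \<sigma> \<circ> lmult K w)"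
    proof
      assume p: "alg_iso scale H K \<phi>"
      have bij: "bij \<phi>" and hom: "\<And>x y. \<phi> (H x y) = K (\<phi> x) (\<phi> y)"
        using p unfolding alg_iso_def by auto
      define \<sigma> where "\<sigma> = \<phi> \<circ> K z"
      have "alg_iso scale K K \<sigma>"
        unfolding alg_iso_def
      proof (intro conjI allI)
        show "Vector_Spaces.linear scale scale \<sigma>" unfolding \<sigma>_def
          by (rule Vector_Spaces.linear_compose[OF linK lin])
        show "bij \<sigma>" unfolding \<sigma>_def using bij bijK[OF zw] by (rule bij_comp[rotated])
        fix x y
        have "K z (K x y) = K (K (K z x) w) (K z y)"
        proof -
          have "K (K (K z x) w) (K z y) = K (K w z) (K z (K x y))" by (simp add: A C LC E)
          then show ?thesis using z E by simp
        qed
        then have "K z (K x y) = H (K z x) (K z y)" unfolding w(2) isotope_def .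
        then have "\<phi> (K z (K x y)) = K (\<phi> (K z x)) (\<phi> (K z y))" using hom by metis
        then show "\<sigma> (K x y) = K (\<sigma> x) (\<sigma> y)"
          unfolding \<sigma>_def by simp
      qed
      moreover have "\<phi> = \<sigma> \<circ> lmult K w"
      proof -
        have "K z (K w x) = x" for x
        proof -
          have "K z (K w x) = K (K z w) x" by (simp add: A)
          then show ?thesis using zw E by simp
        qed
        then show ?thesis unfolding \<sigma>_def lmult_def by (simp add: fun_eq_iff)
      qed
      ultimately show "\<exists>\<sigma>. alg_iso scale K K \<sigma> \<and> \<phi> = \<sigma> \<circ> lmult K w" by blast
    next
      assume "\<exists>\<sigma>. alg_iso scale K K \<sigma> \<and> \<phi> = \<sigma> \<circ> lmult K w"
      then obtain \<sigma> where s: "alg_iso scale K K \<sigma>" and ph: "\<phi> = \<sigma> \<circ> lmult K w" by blast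
      have sb: "bij \<sigma>" and sh: "\<And>x y. \<sigma> (K x y) = K (\<sigma> x) (\<sigma> y)"
        using s unfolding alg_iso_def by auto
      show "alg_iso scale H K \<phi>"
        unfolding alg_iso_def
      proof (intro conjI allI)
        show "Vector_Spaces.linear scale scale \<phi>" by (rule lin)
        show "bij \<phi>" unfolding ph lmult_def using bijK[OF z] sb by (rule bij_comp)
        fix x y
        have "K w (K (K x w) y) = K (K w x) (K w y)" by (simp add: A C LC E)
        then show "\<phi> (H x y) = K (\<phi> x) (\<phi> y)"
          unfolding ph lmult_def w(2) isotope_def using sh by simp
      qed
    qed
  qed
  have uniq: "w1 = w2" if "isotope K w1 = isotope K w2" for w1 w2
    using fun_cong[OF fun_cong[OF that, of e], of e] by (simp add: isotope_def E E2)
  have U: "\<exists>!w. invertible_elem K w \<and> H = isotope K w" if P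
  proof -
    from \<open>P\<close> obtain w where w: "invertible_elem K w" "H = isotope K w" unfolding P_def by blast
    show ?thesis
    proof (rule ex1I[of _ w])
      show "invertible_elem K w \<and> H = isotope K w" using w by simp
      fix w' assume "invertible_elem K w' \<and> H = isotope K w'"
      then have "isotope K w' = isotope K w" using w(2) by simp
      then show "w' = w" by (rule uniq)
    qed
  qed
  have G1: "unital H \<longleftrightarrow> P" using F1' F2 by blast
  have G2: "P \<longleftrightarrow> alg_isomorphic scale H K" using F3 F4 F1' by blast
  have G3: "P \<longrightarrow> (\<exists>!w. invertible_elem K w \<and> H = isotope K w)
         \<and> (\<forall>w. invertible_elem K w \<and> H = isotope K w \<longrightarrow>
              (\<forall>z. is_inverse K w z \<longrightarrow> is_unit_elem H z)
            \<and> (\<exists>u v. w = K u v \<and> f = lmult K u \<and> g = lmult K v)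
            \<and> (\<forall>\<phi>. Vector_Spaces.linear scale scale \<phi> \<longrightarrow>
                 (alg_iso scale H K \<phi> \<longleftrightarrow>
                  (\<exists>\<sigma>. alg_iso scale K K \<sigma> \<and> \<phi> = \<sigma> \<circ> lmult K w))))"
  proof (intro impI conjI)
    assume P
    then show "\<exists>!w. invertible_elem K w \<and> H = isotope K w" by (rule U)
  next
    show "\<forall>w. invertible_elem K w \<and> H = isotope K w \<longrightarrow>
              (\<forall>z. is_inverse K w z \<longrightarrow> is_unit_elem H z)
            \<and> (\<exists>u v. w = K u v \<and> f = lmult K u \<and> g = lmult K v)
            \<and> (\<forall>\<phi>. Vector_Spaces.linear scale scale \<phi> \<longrightarrow>
                 (alg_iso scale H K \<phi> \<longleftrightarrow>
                  (\<exists>\<sigma>. alg_iso scale K K \<sigma> \<and> \<phi> = \<sigma> \<circ> lmult K w)))"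
      using F5 by blast
  qed
  show ?thesis
    using conjI[OF G1 conjI[OF G2 G3]] unfolding H_def P_def .
qed

end
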